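(* For a positive integer $n$ and $1\le k\le n+1$, say that $k$ is reconstructing (resp. directed-reconstructing) for $n$ if any two permutations of $[n]\cup\{0,n+1\}$ having the same $k$-profile (resp. the same directed $k$-profile) are equal, i.e. every $k$-profile (resp. directed $k$-profile) is the $k$-profile of at most one permutation. Let $k_u(n)$ (resp. $k_d(n)$) be the minimum reconstructing (resp. directed-reconstructing) $k$. Then: (a) $k_u(n)=\max\{1,n-3\}$; (b) $k_d(n)\ge \lceil (n-3)/2\rceil$ for $n\ge 4$, and $k_d(n)=1$ for $n=1,2,3$.
   Context: $[n]=\{1,\dots,n\}$. Permutations are of $[n]\cup\{0,n+1\}$, always with $0$ at the leftmost position and $n+1$ at the rightmost position. For a permutation $P$ and elements $t<t+i$, let $\min_{t,t+i}$ and $\max_{t,t+i}$ be the minimum and maximum of the elements located on $P$ in the interval delimited by the element $t$ (included) and the element $t+i$ (included). The $k$-profile of $P$ ($1\le k\le n+1$) is the set of constraints $\{(t,t+i,[\min_{t,t+i},\max_{t,t+i}]) : 1\le i\le k,\ 0\le t\le n+1-i\}$ (no information on which of $t$, $t+i$ is to the left). The directed $k$-profile of $P$ consists of the same constraints together with, for each such pair, the information whether $t$ is to the left or to the right of $t+i$ in $P$. *)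

theory Defs
  imports Complex_Main
begin

definition perms :: "nat \<Rightarrow> nat list set" where
  "perms n = {xs. distinct xs \<and> set xs = {0..n+1} \<and> xs ! 0 = 0 \<and> last xs = n + 1}"

definition pos :: "nat list \<Rightarrow> nat \<Rightarrow> nat" where
  "pos xs a = (THE j. j < length xs \<and> xs ! j = a)"

definition between :: "nat list \<Rightarrow> nat \<Rightarrow> nat \<Rightarrow> nat set" where
  "between xs a b = {xs ! j | j. min (pos xs a) (pos xs b) \<le> j \<and> j \<le> max (pos xs a) (pos xs b)}"

definition k_profile :: "nat \<Rightarrow> nat \<Rightarrow> nat list \<Rightarrow> (nat \<times> nat \<times> nat \<times> nat) set" where
  "k_profile n k xs = {(t, t + i, Min (between xs t (t + i)), Max (between xs t (t + i))) | t i.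
      1 \<le> i \<and> i \<le> k \<and> t + i \<le> n + 1}"

definition directed_k_profile ::
    "nat \<Rightarrow> nat \<Rightarrow> nat list \<Rightarrow> (nat \<times> nat \<times> nat \<times> nat \<times> bool) set" where
  "directed_k_profile n k xs = {(t, t + i, Min (between xs t (t + i)), Max (between xs t (t + i)),
      pos xs t < pos xs (t + i)) | t i. 1 \<le> i \<and> i \<le> k \<and> t + i \<le> n + 1}"

definition reconstructing :: "nat \<Rightarrow> nat \<Rightarrow> bool" where
  "reconstructing n k \<longleftrightarrow> (\<forall>P\<in>perms n. \<forall>Q\<in>perms n. k_profile n k P = k_profile n k Q \<longrightarrow> P = Q)"

definition directed_reconstructing :: "nat \<Rightarrow> nat \<Rightarrow> bool" where
  "directed_reconstructing n k \<longleftrightarrow>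
     (\<forall>P\<in>perms n. \<forall>Q\<in>perms n. directed_k_profile n k P = directed_k_profile n k Q \<longrightarrow> P = Q)"

definition k_u :: "nat \<Rightarrow> nat" where
  "k_u n = (LEAST k. 1 \<le> k \<and> k \<le> n + 1 \<and> reconstructing n k)"

definition k_d :: "nat \<Rightarrow> nat" where
  "k_d n = (LEAST k. 1 \<le> k \<and> k \<le> n + 1 \<and> directed_reconstructing n k)"

end

theory Submission
  imports Defs "HOL-Combinatorics.Multiset_Permutations"
begin


lemma perms_D:
  assumes "P \<in> perms n"
  shows "distinct P" "set P = {0..n+1}" "length P = n+2" "P!0 = 0" "P!(n+1) = n+1"
proof -
  show d: "distinct P" and s: "set P = {0..n+1}" using assms by (auto simp: perms_def)
  have "length P = card (set P)" using d by (simp add: distinct_card)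
  then show l: "length P = n+2" using s by simp
  show "P!0 = 0" using assms by (simp add: perms_def)
  have "last P = n+1" using assms by (simp add: perms_def)
  moreover have "P \<noteq> []" using l by auto
  ultimately show "P!(n+1) = n+1" using l by (simp add: last_conv_nth)
qed

lemma pos_nth: "distinct xs \<Longrightarrow> i < length xs \<Longrightarrow> pos xs (xs!i) = i"
  unfolding pos_def by (rule the_equality) (auto simp: nth_eq_iff_index_eq)

lemma pos_in: assumes "a \<in> set xs" "distinct xs"
  shows "pos xs a < length xs \<and> xs ! pos xs a = a"
proof -
  obtain i where "i < length xs" "xs!i = a" using assms(1) by (auto simp: in_set_conv_nth)
  then show ?thesis using pos_nth[OF assms(2)] by auto
qed

lemma nth_le: assumes "P \<in> perms n" "i \<le> n+1" shows "P!i \<le> n+1"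
proof -
  have "i < length P" using perms_D(3)[OF assms(1)] assms(2) by simp
  then have "P!i \<in> set P" by simp
  then show ?thesis using perms_D(2)[OF assms(1)] by simp
qed

lemma pos_eq: "P \<in> perms n \<Longrightarrow> i \<le> n+1 \<Longrightarrow> pos P (P!i) = i"
  using perms_D[of P n] pos_nth by auto

lemma pos_perm: assumes "P \<in> perms n" "e \<le> n+1"
  shows "pos P e \<le> n+1" "P ! pos P e = e"
  using pos_in[of e P] perms_D[OF assms(1)] assms(2) by auto

lemma pos_inj: "P \<in> perms n \<Longrightarrow> e \<le> n+1 \<Longrightarrow> e' \<le> n+1 \<Longrightarrow> pos P e = pos P e' \<Longrightarrow> e = e'"
  by (metis pos_perm(2))

lemma pos_val: "P \<in> perms n \<Longrightarrow> e \<le> n+1 \<Longrightarrow> pos P e = i \<Longrightarrow> P!i = e"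
  using pos_perm(2) by blast

lemma pos_P0: "P \<in> perms n \<Longrightarrow> pos P 0 = 0"
  using pos_eq[of P n 0] perms_D(4)[of P n] by simp
lemma pos_Pn1: "P \<in> perms n \<Longrightarrow> pos P (n+1) = n+1"
  using pos_eq[of P n "n+1"] perms_D(5)[of P n] by simp

lemma between_iff:
  assumes "P \<in> perms n" "a \<le> n+1" "b \<le> n+1"
  shows "e \<in> between P a b \<longleftrightarrow> e \<le> n+1 \<and> min (pos P a) (pos P b) \<le> pos P e \<and> pos P e \<le> max (pos P a) (pos P b)"
proof
  assume "e \<in> between P a b"
  then obtain j where j: "e = P!j" "min (pos P a) (pos P b) \<le> j" "j \<le> max (pos P a) (pos P b)"
    unfolding between_def by auto
  have "j \<le> n+1" using j(3) pos_perm(1)[OF assms(1) assms(2)] pos_perm(1)[OF assms(1) assms(3)] by auto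
  then show "e \<le> n+1 \<and> min (pos P a) (pos P b) \<le> pos P e \<and> pos P e \<le> max (pos P a) (pos P b)"
    using j pos_eq[OF assms(1)] nth_le[OF assms(1)] by auto
next
  assume "e \<le> n+1 \<and> min (pos P a) (pos P b) \<le> pos P e \<and> pos P e \<le> max (pos P a) (pos P b)"
  then have "P ! pos P e = e \<and> min (pos P a) (pos P b) \<le> pos P e \<and> pos P e \<le> max (pos P a) (pos P b)"
    using pos_perm(2)[OF assms(1)] by blast
  then show "e \<in> between P a b" unfolding between_def by (metis (mono_tags, lifting) CollectI)
qed

lemma between_sub:
  assumes "P \<in> perms n" "a \<le> n+1" "b \<le> n+1"
  shows "between P a b \<subseteq> {0..n+1}" "finite (between P a b)" "a \<in> between P a b" "b \<in> between P a b"
proof -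
  show s: "between P a b \<subseteq> {0..n+1}" using between_iff[OF assms] by auto
  then show "finite (between P a b)" using finite_subset by blast
  show "a \<in> between P a b" "b \<in> between P a b" using between_iff[OF assms] assms by auto
qed

lemma between_sym: "between P a b = between P b a"
  unfolding between_def by (simp add: min.commute max.commute)

lemma Min_b_mem: "P \<in> perms n \<Longrightarrow> a \<le> n+1 \<Longrightarrow> b \<le> n+1 \<Longrightarrow> Min (between P a b) \<in> between P a b"
  using between_sub by (metis Min_in empty_iff)
lemma Max_b_mem: "P \<in> perms n \<Longrightarrow> a \<le> n+1 \<Longrightarrow> b \<le> n+1 \<Longrightarrow> Max (between P a b) \<in> between P a b"
  using between_sub by (metis Max_in empty_iff)
lemma Min_b_le: "P \<in> perms n \<Longrightarrow> a \<le> n+1 \<Longrightarrow> b \<le> n+1 \<Longrightarrow> e \<in> between P a b \<Longrightarrow> Min (between P a b) \<le> e"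
  using between_sub by (metis Min_le)
lemma Max_b_ge: "P \<in> perms n \<Longrightarrow> a \<le> n+1 \<Longrightarrow> b \<le> n+1 \<Longrightarrow> e \<in> between P a b \<Longrightarrow> e \<le> Max (between P a b)"
  using between_sub by (metis Max_ge)

lemma prof_same_lt:
  assumes "k_profile n k P = k_profile n k Q" "a < b" "b \<le> a + k" "b \<le> n+1"
  shows "Min (between P a b) = Min (between Q a b) \<and> Max (between P a b) = Max (between Q a b)"
proof -
  have "(a, a + (b-a), Min (between P a (a + (b-a))), Max (between P a (a+(b-a)))) \<in> k_profile n k P"
    unfolding k_profile_def using assms by (intro CollectI exI[of _ a] exI[of _ "b-a"]) auto
  then have "(a, b, Min (between P a b), Max (between P a b)) \<in> k_profile n k Q"
    using assms by simp
  then show ?thesis unfolding k_profile_def by auto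
qed

definition H :: "nat \<Rightarrow> nat list \<Rightarrow> nat list \<Rightarrow> bool" where
  "H n P Q \<longleftrightarrow> (\<forall>a b. a \<le> n+1 \<longrightarrow> b \<le> n+1 \<longrightarrow> a \<noteq> b \<longrightarrow> a \<le> b + (n-3) \<longrightarrow> b \<le> a + (n-3) \<longrightarrow>
     Min (between P a b) = Min (between Q a b) \<and> Max (between P a b) = Max (between Q a b))"

lemma H_sym: "H n P Q \<Longrightarrow> H n Q P"
  unfolding H_def by metis

lemma H_of_prof: assumes "k_profile n (n-3) P = k_profile n (n-3) Q" shows "H n P Q"
  unfolding H_def
proof (intro allI impI)
  fix a b assume ab: "a \<le> n+1" "b \<le> n+1" "a \<noteq> b" "a \<le> b + (n-3)" "b \<le> a + (n-3)"
  show "Min (between P a b) = Min (between Q a b) \<and> Max (between P a b) = Max (between Q a b)"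
  proof (cases "a < b")
    case True
    have "b \<le> a + (n-3)" using ab by simp
    then show ?thesis using prof_same_lt[OF assms True _ ab(2)] by blast
  next
    case False
    then have "b < a" using ab(3) by simp
    then show ?thesis using prof_same_lt[OF assms \<open>b < a\<close> ab(4) ab(1)] by (simp add: between_sym)
  qed
qed

lemma HMin: "H n P Q \<Longrightarrow> a \<le> n+1 \<Longrightarrow> b \<le> n+1 \<Longrightarrow> a \<noteq> b \<Longrightarrow> a \<le> b + (n-3) \<Longrightarrow> b \<le> a + (n-3) \<Longrightarrow>
  Min (between P a b) = Min (between Q a b)"
  unfolding H_def by blast
lemma HMax: "H n P Q \<Longrightarrow> a \<le> n+1 \<Longrightarrow> b \<le> n+1 \<Longrightarrow> a \<noteq> b \<Longrightarrow> a \<le> b + (n-3) \<Longrightarrow> b \<le> a + (n-3) \<Longrightarrow>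
  Max (between P a b) = Max (between Q a b)"
  unfolding H_def by blast



lemma pos_ge: assumes "P \<in> perms n" "e \<le> n+1" "\<And>i. i < m \<Longrightarrow> P!i \<noteq> e"
  shows "m \<le> pos P e"
  using assms pos_perm(2)[OF assms(1,2)] by (metis not_le)

lemma pos_le_n: assumes "P \<in> perms n" "e \<le> n" shows "pos P e \<le> n"
proof -
  have "pos P e \<le> n+1" using pos_perm(1)[OF assms(1)] assms(2) by simp
  moreover have "pos P e \<noteq> n+1" using pos_Pn1[OF assms(1)] pos_inj[OF assms(1), of e "n+1"] assms(2) by auto
  ultimately show ?thesis by simp
qed

lemma pos_pos: assumes "P \<in> perms n" "e \<le> n+1" "e \<noteq> 0" shows "1 \<le> pos P e"
proof (rule ccontr)
  assume "\<not> 1 \<le> pos P e"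
  then have "pos P e = pos P 0" using pos_P0[OF assms(1)] by simp
  then show False using pos_inj[OF assms(1), of e 0] assms by simp
qed

lemma C3:
  assumes P: "P \<in> perms n" and Q: "Q \<in> perms n" and H: "H n P Q" and n: "n \<ge> 5"
    and p1: "P!1 = 1" "Q!1 = 1" and p2: "P!2 = n" "Q!2 = n-1"
  shows False
proof -
  have P0: "P!0 = 0" "Q!0 = 0" using perms_D P Q by auto
  have a1: "pos P (P!1) = 1" "pos P (P!2) = 2" "pos Q (Q!1) = 1" "pos Q (Q!2) = 2"
    using pos_eq[OF P, of 1] pos_eq[OF P, of 2] pos_eq[OF Q, of 1] pos_eq[OF Q, of 2] n by auto
  have pP: "pos P 1 = 1" "pos P n = 2" "pos P 0 = 0" "pos P (n+1) = n+1"
    using a1 p1 p2 pos_P0[OF P] pos_Pn1[OF P] by auto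
  have pQ: "pos Q 1 = 1" "pos Q (n-1) = 2" "pos Q 0 = 0" "pos Q (n+1) = n+1"
    using a1 p1 p2 pos_P0[OF Q] pos_Pn1[OF Q] by auto
  have lt3: "i < 3 \<Longrightarrow> i = 0 \<or> i = 1 \<or> i = 2" for i :: nat by auto
  have P2: "3 \<le> pos P 2" using pos_ge[OF P, of 2 3] lt3 P0 p1 p2 n by fastforce
  have Q2: "3 \<le> pos Q 2" using pos_ge[OF Q, of 2 3] lt3 P0 p1 p2 n by fastforce
  have Pn1: "3 \<le> pos P (n-1)" using pos_ge[OF P, of "n-1" 3] lt3 P0 p1 p2 n by fastforce
  have Qn: "3 \<le> pos Q n" using pos_ge[OF Q, of n 3] lt3 P0 p1 p2 n by fastforce
  have b: "pos P 2 \<le> n" "pos Q 2 \<le> n" "pos P (n-1) \<le> n" "pos Q n \<le> n"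
    using pos_le_n[OF P] pos_le_n[OF Q] n by auto
  have e1: "Max (between P 0 2) = Max (between Q 0 2)" using HMax[OF H, of 0 2] n by simp
  have e2: "Max (between P (n-1) 2) = Max (between Q (n-1) 2)" using HMax[OF H, of "n-1" 2] n by simp
  have "n \<in> between P 0 2" using between_iff[OF P, of 0 2 n] pP P2 n by auto
  then have m1: "n \<le> Max (between P 0 2)" using Max_b_ge[OF P] n by simp
  show False
  proof (cases "pos Q 2 < pos Q n")
    case True
    let ?m = "Max (between Q 0 2)"
    have "?m \<in> between Q 0 2" using Max_b_mem[OF Q] n by simp
    then have mm: "?m \<le> n+1" "pos Q ?m \<le> pos Q 2" using between_iff[OF Q, of 0 2] pQ n by auto
    then have "?m \<noteq> n" "?m \<noteq> n+1" using True pQ b by auto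
    then show False using mm m1 e1 by simp
  next
    case False
    then have "n \<in> between Q (n-1) 2" using between_iff[OF Q, of "n-1" 2 n] pQ Q2 Qn n by auto
    then have m2: "n \<le> Max (between Q (n-1) 2)" using Max_b_ge[OF Q] n by simp
    let ?m = "Max (between P (n-1) 2)"
    have "?m \<in> between P (n-1) 2" using Max_b_mem[OF P] n by simp
    then have mm: "?m \<le> n+1" "min (pos P (n-1)) (pos P 2) \<le> pos P ?m" "pos P ?m \<le> max (pos P (n-1)) (pos P 2)"
      using between_iff[OF P, of "n-1" 2] n by auto
    then have "?m \<noteq> n" "?m \<noteq> n+1" using P2 Pn1 pP b by auto
    then show False using mm m2 e2 by simp
  qed
qed

lemma C2:
  assumes P: "P \<in> perms n" and Q: "Q \<in> perms n" and H: "H n P Q" and n: "n \<ge> 5"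
    and p1: "P!1 = n" "Q!1 = n" and p2: "P!2 = 1" "Q!2 = 2"
  shows False
proof -
  have P0: "P!0 = 0" "Q!0 = 0" using perms_D P Q by auto
  have a1: "pos P (P!1) = 1" "pos P (P!2) = 2" "pos Q (Q!1) = 1" "pos Q (Q!2) = 2"
    using pos_eq[OF P, of 1] pos_eq[OF P, of 2] pos_eq[OF Q, of 1] pos_eq[OF Q, of 2] n by auto
  have pP: "pos P n = 1" "pos P 1 = 2" "pos P 0 = 0" "pos P (n+1) = n+1"
    using a1 p1 p2 pos_P0[OF P] pos_Pn1[OF P] by auto
  have pQ: "pos Q n = 1" "pos Q 2 = 2" "pos Q 0 = 0" "pos Q (n+1) = n+1"
    using a1 p1 p2 pos_P0[OF Q] pos_Pn1[OF Q] by auto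
  have lt3: "i < 3 \<Longrightarrow> i = 0 \<or> i = 1 \<or> i = 2" for i :: nat by auto
  have P4: "3 \<le> pos P 4" using pos_ge[OF P, of 4 3] lt3 P0 p1 p2 n by fastforce
  have Q4: "3 \<le> pos Q 4" using pos_ge[OF Q, of 4 3] lt3 P0 p1 p2 n by fastforce
  have P2: "3 \<le> pos P 2" using pos_ge[OF P, of 2 3] lt3 P0 p1 p2 n by fastforce
  have Q1: "3 \<le> pos Q 1" using pos_ge[OF Q, of 1 3] lt3 P0 p1 p2 n by fastforce
  have P4b: "pos P 4 \<le> n+1" "pos P 2 \<le> n+1" using pos_perm(1)[OF P] n by auto
  have Q4b: "pos Q 4 \<le> n+1" "pos Q 1 \<le> n+1" using pos_perm(1)[OF Q] n by auto
  have big: "v \<le> n+1 \<Longrightarrow> 3 \<le> pos P v \<Longrightarrow> 2 \<le> v" for v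
  proof (rule ccontr)
    assume v: "v \<le> n+1" "3 \<le> pos P v" "\<not> 2 \<le> v"
    then have "v = 0 \<or> v = 1" by auto
    then show False using v pP by auto
  qed
  have m1: "2 \<le> Min (between P 4 (n+1))"
  proof -
    let ?m = "Min (between P 4 (n+1))"
    have "?m \<in> between P 4 (n+1)" using Min_b_mem[OF P] n by simp
    then have "?m \<le> n+1" "pos P 4 \<le> pos P ?m" using between_iff[OF P, of 4 "n+1"] n pP P4b by auto
    then show ?thesis using big P4 by auto
  qed
  have e1: "Min (between P 4 (n+1)) = Min (between Q 4 (n+1))"
    using HMin[OF H, of 4 "n+1"] n by simp
  have e2: "Min (between P 2 4) = Min (between Q 2 4)"
    using HMin[OF H, of 2 4] n by simp
  show False
  proof (cases "pos Q 4 < pos Q 1")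
    case True
    then have "1 \<in> between Q 4 (n+1)" using between_iff[OF Q, of 4 "n+1" 1] n pQ Q4b by auto
    then have "Min (between Q 4 (n+1)) \<le> 1" using Min_b_le[OF Q] n by simp
    then show False using m1 e1 by simp
  next
    case False
    then have "1 \<in> between Q 2 4" using between_iff[OF Q, of 2 4 1] n pQ Q1 by auto
    then have "Min (between Q 2 4) \<le> 1" using Min_b_le[OF Q] n by simp
    moreover have "2 \<le> Min (between P 2 4)"
    proof -
      let ?m = "Min (between P 2 4)"
      have "?m \<in> between P 2 4" using Min_b_mem[OF P] n by simp
      then have "?m \<le> n+1" "min (pos P 2) (pos P 4) \<le> pos P ?m" using between_iff[OF P, of 2 4] n by auto
      then show ?thesis using big P4 P2 by auto
    qed
    ultimately show False using e2 by simp
  qed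
qed


lemma C1:
  assumes P: "P \<in> perms n" and Q: "Q \<in> perms n" and H: "H n P Q" and n: "n \<ge> 5"
    and p1: "P!1 = x" "Q!1 = y" and xy: "n-2 \<le> x" "x < y" "y \<le> n"
  shows False
proof -
  have P0: "P!0 = 0" "Q!0 = 0" using perms_D P Q by auto
  have a1: "pos P (P!1) = 1" "pos Q (Q!1) = 1"
    using pos_eq[OF P, of 1] pos_eq[OF Q, of 1] n by auto
  have pP: "pos P x = 1" "pos P 0 = 0" "pos P (n+1) = n+1"
    using a1 p1 pos_P0[OF P] pos_Pn1[OF P] by auto
  have pQ: "pos Q y = 1" "pos Q 0 = 0" "pos Q (n+1) = n+1"
    using a1 p1 pos_P0[OF Q] pos_Pn1[OF Q] by auto
  have lt2: "i < 2 \<Longrightarrow> i = 0 \<or> i = 1" for i :: nat by auto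
  have P2: "2 \<le> pos P 2" using pos_ge[OF P, of 2 2] lt2 P0 p1 xy n by fastforce
  have Q2: "2 \<le> pos Q 2" using pos_ge[OF Q, of 2 2] lt2 P0 p1 xy n by fastforce
  have Qx: "2 \<le> pos Q x" using pos_ge[OF Q, of x 2] lt2 P0 p1 xy n by fastforce
  have Py: "2 \<le> pos P y" using pos_ge[OF P, of y 2] lt2 P0 p1 xy n by fastforce
  have b: "pos P 2 \<le> n" "pos Q 2 \<le> n" "pos Q x \<le> n" "pos P y \<le> n"
    using pos_le_n[OF P] pos_le_n[OF Q] n xy by auto
  have pPn: "pos P n \<le> n" "pos Q n \<le> n" using pos_le_n[OF P] pos_le_n[OF Q] by auto
  have e02: "Max (between P 0 2) = Max (between Q 0 2)" using HMax[OF H, of 0 2] n by simp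
  show False
  proof (cases "y = n")
    case True
    have "n \<in> between Q 0 2" using between_iff[OF Q, of 0 2 n] pQ Q2 n True by auto
    then have "n \<le> Max (between Q 0 2)" using Max_b_ge[OF Q] n by simp
    then have v1: "n \<le> Max (between P 0 2)" using e02 by simp
    let ?v = "Max (between P 0 2)"
    have "?v \<in> between P 0 2" using Max_b_mem[OF P] n by simp
    then have vv: "?v \<le> n+1" "pos P ?v \<le> pos P 2" using between_iff[OF P, of 0 2] pP n by auto
    then have "?v \<noteq> n+1" using b pP by auto
    then have "?v = n" using vv v1 by simp
    then have pn: "pos P n \<le> pos P 2" using vv by simp
    have "pos P n \<noteq> 0" using pP pos_inj[OF P, of n 0] n by auto
    then have "n \<in> between P x 2" using between_iff[OF P, of x 2 n] pP pn xy n by auto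
    then have "n \<le> Max (between P x 2)" using Max_b_ge[OF P] n xy by simp
    moreover have "Max (between P x 2) = Max (between Q x 2)" using HMax[OF H, of x 2] n xy True by simp
    moreover
    let ?w = "Max (between Q x 2)"
    have "?w \<in> between Q x 2" using Max_b_mem[OF Q] n xy by simp
    then have ww: "?w \<le> n+1" "min (pos Q x) (pos Q 2) \<le> pos Q ?w" "pos Q ?w \<le> max (pos Q x) (pos Q 2)"
      using between_iff[OF Q, of x 2] n xy by auto
    then have "?w \<noteq> n" "?w \<noteq> n+1" using Qx Q2 pQ True b by auto
    ultimately show False using ww by simp
  next
    case False
    then have yx: "y = n-1" "x = n-2" using xy by auto
    let ?a = "Max (between Q 0 2)"
    have "y \<in> between Q 0 2" using between_iff[OF Q, of 0 2 y] pQ Q2 n xy by auto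
    then have a1: "y \<le> ?a" using Max_b_ge[OF Q] n by simp
    have "Max (between P 0 2) \<in> between P 0 2" using Max_b_mem[OF P] n by simp
    then have "?a \<in> between P 0 2" using e02 by simp
    then have aa: "?a \<le> n+1" "pos P ?a \<le> pos P 2" using between_iff[OF P, of 0 2] pP n by auto
    have "pos P ?a \<noteq> 0" using pP pos_inj[OF P, of ?a 0] a1 aa xy by auto
    then have "?a \<in> between P x 2" using between_iff[OF P, of x 2 ?a] pP aa xy n by auto
    then have ax1: "?a \<le> Max (between P x 2)" using Max_b_ge[OF P] n xy by simp
    have ax2: "Max (between P x 2) \<le> ?a"
    proof -
      have "Max (between P x 2) \<in> between P x 2" using Max_b_mem[OF P] n xy by simp
      then have "Max (between P x 2) \<in> between P 0 2" using between_iff[OF P, of x 2] between_iff[OF P, of 0 2] pP P2 n xy by auto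
      then have "Max (between P x 2) \<le> Max (between P 0 2)" using Max_b_ge[OF P, of 0 2] n by simp
      then show ?thesis using e02 by simp
    qed
    have exq: "Max (between P x 2) = Max (between Q x 2)" using HMax[OF H, of x 2] n yx by simp
    let ?w = "Max (between Q x 2)"
    have wa: "?w = ?a" using ax1 ax2 exq by simp
    have "?w \<in> between Q x 2" using Max_b_mem[OF Q] n xy by simp
    then have ww: "?w \<le> n+1" "min (pos Q x) (pos Q 2) \<le> pos Q ?w" "pos Q ?w \<le> max (pos Q x) (pos Q 2)"
      using between_iff[OF Q, of x 2] n xy by auto
    then have "?w \<noteq> y" "?w \<noteq> n+1" using Qx Q2 pQ b by auto
    then have wn: "?w = n" using ww wa a1 yx by simp
    have "?a \<in> between Q 0 2" using Max_b_mem[OF Q] n by simp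
    then have qn2: "pos Q n \<le> pos Q 2" using between_iff[OF Q, of 0 2] pQ n wn wa by auto
    have "pos Q n \<noteq> pos Q 2" using pos_inj[OF Q, of n 2] n by auto
    moreover have "pos Q n \<noteq> pos Q x"
    proof
      assume "pos Q n = pos Q x"
      then have "n = x" using pos_inj[OF Q, of n x] xy by simp
      then show False using yx n by simp
    qed
    ultimately have qxn: "pos Q x < pos Q n" using ww wn qn2 by (auto simp: min_def max_def split: if_splits)
    have "n \<in> between Q y 2" using between_iff[OF Q, of y 2 n] pQ qn2 Q2 n xy pos_pos[OF Q, of n] by auto
    then have "n \<le> Max (between Q y 2)" using Max_b_ge[OF Q] n xy by simp
    moreover have "Max (between P y 2) = Max (between Q y 2)" using HMax[OF H, of y 2] n yx by simp
    ultimately have c1: "n \<le> Max (between P y 2)" by simp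
    let ?c = "Max (between P y 2)"
    have "?c \<in> between P y 2" using Max_b_mem[OF P] n xy by simp
    then have cc: "?c \<le> n+1" "min (pos P y) (pos P 2) \<le> pos P ?c" "pos P ?c \<le> max (pos P y) (pos P 2)"
      using between_iff[OF P, of y 2] n xy by auto
    then have "?c \<noteq> n+1" using pP b by auto
    then have cn: "?c = n" using cc c1 by simp
    have pn2: "pos P n \<le> pos P 2" using aa wa wn by simp
    have "pos P n \<noteq> pos P 2" using pos_inj[OF P, of n 2] n by auto
    moreover have "pos P n \<noteq> pos P y"
    proof
      assume "pos P n = pos P y"
      then have "n = y" using pos_inj[OF P, of n y] xy by simp
      then show False using yx n by simp
    qed
    ultimately have pyn: "pos P y < pos P n" using cc cn pn2 by (auto simp: min_def max_def split: if_splits)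
    have "x \<in> between Q y n" using between_iff[OF Q, of y n x] pQ qxn n xy Qx by auto
    then have "Min (between Q y n) \<le> x" using Min_b_le[OF Q] n xy by simp
    moreover have "Min (between P y n) = Min (between Q y n)" using HMin[OF H, of y n] n yx by simp
    ultimately have e0: "Min (between P y n) \<le> x" by simp
    let ?e = "Min (between P y n)"
    have "?e \<in> between P y n" using Min_b_mem[OF P] n xy by simp
    then have ee: "?e \<le> n+1" "pos P y \<le> pos P ?e" "pos P ?e \<le> pos P n"
      using between_iff[OF P, of y n] n xy pyn by auto
    have "?e \<noteq> x" using ee pP Py by auto
    moreover have "?e \<noteq> 0"
    proof
      assume "?e = 0" then have "pos P ?e = 0" using pP by simp
      then show False using ee Py by simp
    qed
    ultimately have e13: "1 \<le> ?e" "?e \<le> n-3" using e0 yx by auto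
    have "pos P ?e \<noteq> pos P n"
    proof
      assume "pos P ?e = pos P n"
      moreover have "?e \<le> n+1" using e13 by simp
      ultimately have "?e = n" using pos_inj[OF P, of ?e n] by simp
      then show False using e13 n by simp
    qed
    then have pen: "pos P ?e < pos P n" using ee by simp
    have "y \<in> between P x ?e" using between_iff[OF P, of x ?e y] pP ee e13 n xy Py by auto
    then have "y \<le> Max (between P x ?e)" using Max_b_ge[OF P] n e13 xy by simp
    moreover
    let ?m = "Max (between P x ?e)"
    have "?m \<in> between P x ?e" using Max_b_mem[OF P] n e13 xy by simp
    then have mm: "?m \<le> n+1" "pos P ?m \<le> pos P ?e"
      using between_iff[OF P, of x ?e] n e13 xy pP ee Py by auto
    then have "?m \<noteq> n" "?m \<noteq> n+1" using pen pP b ee pPn by auto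
    ultimately have mv: "?m = y" using mm yx by linarith
    have "Max (between P x ?e) = Max (between Q x ?e)" using HMax[OF H, of x ?e] n yx e13 by simp
    then have mq: "Max (between Q x ?e) = y" using mv by simp
    have "Max (between Q x ?e) \<in> between Q x ?e" using Max_b_mem[OF Q] n e13 xy by simp
    then have "min (pos Q x) (pos Q ?e) \<le> pos Q y" using between_iff[OF Q, of x ?e] n e13 xy mq by auto
    moreover have "2 \<le> pos Q ?e" using pos_ge[OF Q, of ?e 2] lt2 P0 p1 e13 yx n by fastforce
    ultimately show False using Qx pQ by simp
  qed
qed



lemma FD:
  assumes P: "P \<in> perms n" and Q: "Q \<in> perms n" and ne: "P \<noteq> Q"
  shows "\<exists>j. 1 \<le> j \<and> j \<le> n \<and> (\<forall>i<j. P!i = Q!i) \<and> P!j \<noteq> Q!j"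
proof -
  have l: "length P = n+2" "length Q = n+2" using perms_D P Q by auto
  have "\<exists>i. i < n+2 \<and> P!i \<noteq> Q!i"
  proof (rule ccontr)
    assume "\<not> ?thesis"
    then have "P = Q" using l by (intro nth_equalityI) auto
    then show False using ne by simp
  qed
  then have ex: "\<exists>i. P!i \<noteq> Q!i" by blast
  define j where "j = (LEAST i. P!i \<noteq> Q!i)"
  have j1: "P!j \<noteq> Q!j" unfolding j_def using LeastI_ex[OF ex] .
  have j2: "\<forall>i<j. P!i = Q!i" unfolding j_def using not_less_Least by blast
  have "j \<noteq> 0"
  proof
    assume "j = 0" then show False using j1 perms_D(4)[OF P] perms_D(4)[OF Q] by simp
  qed
  moreover have "j \<noteq> n+1"
  proof
    assume "j = n+1" then show False using j1 perms_D(5)[OF P] perms_D(5)[OF Q] by simp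
  qed
  moreover have "j < n+2"
  proof (rule ccontr)
    assume "\<not> j < n+2"
    obtain i where "i < n+2" "P!i \<noteq> Q!i" using \<open>\<exists>i. i < n+2 \<and> P!i \<noteq> Q!i\<close> by blast
    then show False using j2 \<open>\<not> j < n+2\<close> by auto
  qed
  ultimately show ?thesis using j1 j2 by (intro exI[of _ j]) auto
qed

lemma LL:
  assumes P: "P \<in> perms n" and Q: "Q \<in> perms n" and H: "H n P Q" and n: "n \<ge> 5"
    and j: "j \<le> n" "\<forall>i<j. P!i = Q!i" "P!j \<noteq> Q!j" and i: "i < j"
    and c: "P!i \<le> P!j + (n-3)" "P!j \<le> P!i + (n-3)"
  shows "\<exists>m1 m2. i \<le> m1 \<and> m1 \<le> j \<and> i \<le> m2 \<and> m2 \<le> j \<and> P!m1 \<le> Q!j \<and> Q!j \<le> P!m2"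
proof -
  let ?a = "P!i" and ?x = "P!j" and ?y = "Q!j"
  have bnd: "?a \<le> n+1" "?x \<le> n+1" "?y \<le> n+1" using nth_le[OF P] nth_le[OF Q] j i by auto
  have pa: "pos P ?a = i" "pos P ?x = j" "pos Q ?a = i" "pos Q ?y = j"
    using pos_eq[OF P, of i] pos_eq[OF P, of j] pos_eq[OF Q, of i] pos_eq[OF Q, of j] j i by auto
  have ax: "?a \<noteq> ?x" using pa i by (metis less_irrefl)
  have qx: "j + 1 \<le> pos Q ?x"
  proof (rule pos_ge[OF Q bnd(2)])
    fix m assume m: "m < j+1"
    show "Q!m \<noteq> ?x"
    proof
      assume qm: "Q!m = ?x"
      show False
      proof (cases "m = j")
        case True then show False using qm j by simp
      next
        case False
        then have "m < j" using m by simp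
        then have "P!m = ?x" using qm j by simp
        then have "pos P (P!m) = j" using pa by simp
        then show False using pos_eq[OF P, of m] \<open>m < j\<close> j by simp
      qed
    qed
  qed
  have "?y \<in> between Q ?a ?x" using between_iff[OF Q bnd(1,2), of ?y] pa qx i bnd by auto
  then have y1: "Min (between Q ?a ?x) \<le> ?y" "?y \<le> Max (between Q ?a ?x)"
    using Min_b_le[OF Q bnd(1,2)] Max_b_ge[OF Q bnd(1,2)] by auto
  have e: "Min (between P ?a ?x) = Min (between Q ?a ?x)" "Max (between P ?a ?x) = Max (between Q ?a ?x)"
    using HMin[OF H bnd(1,2) ax c(1) c(2)] HMax[OF H bnd(1,2) ax c(1) c(2)] by auto
  let ?m1 = "pos P (Min (between P ?a ?x))" and ?m2 = "pos P (Max (between P ?a ?x))"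
  have mem: "Min (between P ?a ?x) \<in> between P ?a ?x" "Max (between P ?a ?x) \<in> between P ?a ?x"
    using Min_b_mem[OF P bnd(1,2)] Max_b_mem[OF P bnd(1,2)] by auto
  have r1: "i \<le> ?m1 \<and> ?m1 \<le> j \<and> P!?m1 = Min (between P ?a ?x)"
    using mem(1) between_iff[OF P bnd(1,2)] pa i pos_perm(2)[OF P] by auto
  have r2: "i \<le> ?m2 \<and> ?m2 \<le> j \<and> P!?m2 = Max (between P ?a ?x)"
    using mem(2) between_iff[OF P bnd(1,2)] pa i pos_perm(2)[OF P] by auto
  show ?thesis using r1 r2 y1 e by (intro exI[of _ ?m1] exI[of _ ?m2]) auto
qed

lemma Core:
  assumes P: "P \<in> perms n" and Q: "Q \<in> perms n" and H: "H n P Q" and n: "n \<ge> 5"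
    and j: "1 \<le> j" "j \<le> n" "\<forall>i<j. P!i = Q!i" "P!j \<noteq> Q!j"
    and far: "\<not> (P!(j-1) \<le> P!j + (n-3) \<and> P!j \<le> P!(j-1) + (n-3))"
  shows False
proof -
  have H': "H n Q P" using H_sym[OF H] .
  have j': "\<forall>i<j. Q!i = P!i" "Q!j \<noteq> P!j" using j by auto
  define s where "s = P!(j-1)"
  define x where "x = P!j"
  define y where "y = Q!j"
  have sQ: "Q!(j-1) = s" using j s_def by simp
  have bnd: "s \<le> n+1" "x \<le> n+1" "y \<le> n+1" unfolding s_def x_def y_def using nth_le[OF P] nth_le[OF Q] j(2) by auto
  have pos: "pos P s = j-1" "pos P x = j" "pos Q y = j" "pos Q s = j-1"
  proof -
    have "pos P (P!(j-1)) = j-1" "pos P (P!j) = j" "pos Q (Q!j) = j" "pos Q (Q!(j-1)) = j-1"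
      using pos_eq[OF P, of "j-1"] pos_eq[OF P, of j] pos_eq[OF Q, of j] pos_eq[OF Q, of "j-1"] j(2) by auto
    then show "pos P s = j-1" "pos P x = j" "pos Q y = j" "pos Q s = j-1"
      unfolding s_def x_def y_def using sQ[unfolded s_def] by auto
  qed
  have x0: "x \<noteq> 0"
  proof
    assume "x = 0" then have "j = 0" using pos pos_P0[OF P] by simp
    then show False using j by simp
  qed
  have y0: "y \<noteq> 0"
  proof
    assume "y = 0" then have "j = 0" using pos pos_P0[OF Q] by simp
    then show False using j by simp
  qed
  have xn: "x \<le> n"
  proof (rule ccontr)
    assume "\<not> x \<le> n" then have "x = n+1" using bnd by simp
    then show False using pos pos_Pn1[OF P] j by simp
  qed
  have yn: "y \<le> n"
  proof (rule ccontr)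
    assume "\<not> y \<le> n" then have "y = n+1" using bnd by simp
    then show False using pos pos_Pn1[OF Q] j by simp
  qed
  have sn: "s \<le> n"
  proof (rule ccontr)
    assume "\<not> s \<le> n" then have "s = n+1" using bnd by simp
    then show False using pos pos_Pn1[OF P] j by simp
  qed
  have xy: "x \<noteq> y" using j x_def y_def by simp
  have sy: "s \<noteq> y"
  proof
    assume "s = y" then have "j - 1 = j" using pos by simp
    then show False using j by simp
  qed
  have sx: "s \<noteq> x"
  proof
    assume "s = x" then have "j - 1 = j" using pos by simp
    then show False using j by simp
  qed
  have LLP: "\<exists>m1 m2. i \<le> m1 \<and> m1 \<le> j \<and> i \<le> m2 \<and> m2 \<le> j \<and> P!m1 \<le> y \<and> y \<le> P!m2"
    if "i < j" "P!i \<le> x + (n-3)" "x \<le> P!i + (n-3)" for i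
    using LL[OF P Q H n j(2) j(3) j(4) that[unfolded x_def]] x_def y_def by simp
  have LLQ: "\<exists>m1 m2. i \<le> m1 \<and> m1 \<le> j \<and> i \<le> m2 \<and> m2 \<le> j \<and> Q!m1 \<le> x \<and> x \<le> Q!m2"
    if "i < j" "Q!i \<le> y + (n-3)" "y \<le> Q!i + (n-3)" for i
    using LL[OF Q P H' n j(2) j'(1) j'(2) that[unfolded y_def]] x_def y_def by simp
  have vP1: "P!m = s \<or> P!m = x" if "j-1 \<le> m" "m \<le> j" for m
  proof -
    have "m = j-1 \<or> m = j" using that by arith
    then show ?thesis using s_def x_def by auto
  qed
  have vQ1: "Q!m = s \<or> Q!m = y" if "j-1 \<le> m" "m \<le> j" for m
  proof -
    have "m = j-1 \<or> m = j" using that by arith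
    then show ?thesis using sQ y_def by auto
  qed
  have tfacts: "P!(j-2) \<noteq> 0 \<and> P!(j-2) \<noteq> s \<and> P!(j-2) \<noteq> x \<and> P!(j-2) \<noteq> y \<and> P!(j-2) \<le> n \<and> Q!(j-2) = P!(j-2)"
    if j3: "3 \<le> j"
  proof -
    let ?t = "P!(j-2)"
    have tq: "Q!(j-2) = ?t" using j(3) j3 by simp
    have tb: "?t \<le> n+1" using nth_le[OF P, of "j-2"] j by simp
    have pt1: "pos P ?t = j-2" using pos_eq[OF P, of "j-2"] j(2) by simp
    have "pos Q (Q!(j-2)) = j-2" using pos_eq[OF Q, of "j-2"] j(2) by simp
    then have pt2: "pos Q ?t = j-2" using tq by simp
    note pt = pt1 pt2
    have "?t \<noteq> 0"
    proof
      assume "?t = 0" then have "j - 2 = 0" using pt1 pos_P0[OF P] by simp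
      then show False using j3 by simp
    qed
    moreover have "?t \<noteq> s" using pt pos j3 by auto
    moreover have "?t \<noteq> x" using pt pos j3 by auto
    moreover have "?t \<noteq> y" using pt pos j3 by auto
    moreover have "?t \<noteq> n+1" using pt pos_Pn1[OF P] j(2) by auto
    ultimately show ?thesis using tb tq by auto
  qed
  have vP2: "P!m = P!(j-2) \<or> P!m = s \<or> P!m = x" if "j-2 \<le> m" "m \<le> j" for m
  proof -
    have "m = j-2 \<or> m = j-1 \<or> m = j" using that by arith
    then show ?thesis using s_def x_def by auto
  qed
  have vQ2: "Q!m = P!(j-2) \<or> Q!m = s \<or> Q!m = y" if "j-2 \<le> m" "m \<le> j" "3 \<le> j" for m
  proof -
    have "m = j-2 \<or> m = j-1 \<or> m = j" using that by arith
    moreover have "Q!(j-2) = P!(j-2)" using j(3) that(3) by simp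
    ultimately show ?thesis using sQ y_def by auto
  qed
  show False
  proof (cases "s < x")
    case True
    then have fx: "s + (n-3) < x" using far s_def x_def by simp
    consider "s = 0" | "s = 1" | "s = 2" | "3 \<le> s" by arith
    then show False
    proof cases
      case 1
      have "pos P 0 = j-1" using pos 1 by simp
      then have j1: "j = 1" using pos_P0[OF P] j by simp
      have yb: "n-2 \<le> y"
      proof (rule ccontr)
        assume "\<not> n-2 \<le> y"
        then have "y \<le> n-3" using n by simp
        then have "\<exists>m1 m2. 0 \<le> m1 \<and> m1 \<le> j \<and> 0 \<le> m2 \<and> m2 \<le> j \<and> Q!m1 \<le> x \<and> x \<le> Q!m2"
          using LLQ[of 0] j1 perms_D(4)[OF Q] by simp
        then obtain m1 m2 where "0 \<le> m2" "m2 \<le> j" "x \<le> Q!m2" by blast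
        then have "x \<le> s \<or> x \<le> y" using vQ1[of m2] j1 by auto
        then show False using fx 1 \<open>\<not> n-2 \<le> y\<close> by auto
      qed
      have "P!1 = x" "Q!1 = y" using j1 x_def y_def by auto
      moreover have "n-2 \<le> x" using fx 1 by simp
      ultimately show False
      proof (cases "x < y")
        case True then show False using C1[OF P Q H n] \<open>P!1 = x\<close> \<open>Q!1 = y\<close> \<open>n-2 \<le> x\<close> yn by blast
      next
        case False then have "y < x" using xy by simp
        then show False using C1[OF Q P H' n] \<open>P!1 = x\<close> \<open>Q!1 = y\<close> yb xn by blast
      qed
    next
      case 2
      have j2: "2 \<le> j"
      proof (rule ccontr)
        assume "\<not> 2 \<le> j" then have "j = 1" using j by simp
        then show False using s_def 2 perms_D(4)[OF P] by simp
      qed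
      have yb: "n-1 \<le> y"
      proof (rule ccontr)
        assume a: "\<not> n-1 \<le> y"
        have "y \<noteq> 1" using sy 2 by simp
        then have c: "Q!(j-1) \<le> y + (n-3)" "y \<le> Q!(j-1) + (n-3)" using sQ 2 a y0 n by auto
        have jl: "j-1 < j" using j(1) by simp
        obtain m1 m2 where "j-1 \<le> m2" "m2 \<le> j" "x \<le> Q!m2"
          using LLQ[OF jl c] by blast
        then have "x \<le> s \<or> x \<le> y" using vQ1[of m2] by auto
        then show False using fx 2 a by auto
      qed
      show False
      proof (cases "3 \<le> j")
        case True
        let ?t = "P!(j-2)"
        have tf: "?t \<noteq> 0" "?t \<noteq> s" "?t \<noteq> x" "?t \<noteq> y" "?t \<le> n" "Q!(j-2) = ?t" using tfacts[OF True] by auto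
        have xyc: "(x = n-1 \<and> y = n) \<or> (x = n \<and> y = n-1)" using fx 2 yb xn yn xy n by arith
        have tn: "?t \<noteq> n-1" "?t \<noteq> n" using tf xyc by auto
        have t2: "2 \<le> ?t" "?t \<le> n-2" using tf 2 tn by arith+
        show False
        proof (cases "x = n-1")
          case True
          then have "y = n" using yb yn xy by simp
          have jl: "j-2 < j" using \<open>3 \<le> j\<close> by simp
          have c: "P!(j-2) \<le> x + (n-3)" "x \<le> P!(j-2) + (n-3)" using t2 True n by auto
          obtain m1 m2 where "j-2 \<le> m2" "m2 \<le> j" "y \<le> P!m2"
            using LLP[OF jl c] by blast
          then have "y \<le> ?t \<or> y \<le> s \<or> y \<le> x" using vP2[of m2] by auto
          then show False using t2 True \<open>y = n\<close> 2 n by auto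
        next
          case False
          then have "x = n" "y = n-1" using fx 2 xn yb yn xy by auto
          have jl: "j-2 < j" using \<open>3 \<le> j\<close> by simp
          have c: "Q!(j-2) \<le> y + (n-3)" "y \<le> Q!(j-2) + (n-3)" using t2 tf(6) \<open>y = n-1\<close> n by auto
          obtain m1 m2 where "j-2 \<le> m2" "m2 \<le> j" "x \<le> Q!m2"
            using LLQ[OF jl c] by blast
          then have "x \<le> ?t \<or> x \<le> s \<or> x \<le> y" using vQ2[of m2] \<open>3 \<le> j\<close> by auto
          then show False using t2 \<open>x = n\<close> \<open>y = n-1\<close> 2 n by auto
        qed
      next
        case False
        then have j2': "j = 2" using j2 by simp
        have pq: "P!1 = 1" "Q!1 = 1" "P!2 = x" "Q!2 = y" using j2' s_def sQ 2 x_def y_def by auto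
        show False
        proof (cases "x = n")
          case True
          then have "y = n-1" using yb yn xy by simp
          then show False using C3[OF P Q H n] pq True by simp
        next
          case False
          then have "x = n-1" "y = n" using fx 2 xn yb yn xy by auto
          then show False using C3[OF Q P H' n] pq by simp
        qed
      qed
    next
      case 3
      then have "x = n" using fx xn n by simp
      have "y \<noteq> 2" using sy 3 by simp
      then have c: "Q!(j-1) \<le> y + (n-3)" "y \<le> Q!(j-1) + (n-3)" using sQ 3 y0 yn xy \<open>x = n\<close> n by auto
      have jl: "j-1 < j" using j(1) by simp
      obtain m1 m2 where "j-1 \<le> m2" "m2 \<le> j" "x \<le> Q!m2"
        using LLQ[OF jl c] by blast
      then have "x \<le> s \<or> x \<le> y" using vQ1[of m2] by auto
      then show False using \<open>x = n\<close> 3 yn xy n by auto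
    next
      case 4
      then show False using fx xn n by simp
    qed
  next
    case False
    then have sx': "x < s" using sx by simp
    then have fs: "x + (n-3) < s" using far s_def x_def by simp
    have x2: "x \<le> 2" using fs sn n by simp
    have yfar: "\<not> (s \<le> y + (n-3) \<and> y \<le> s + (n-3))"
    proof
      assume a: "s \<le> y + (n-3) \<and> y \<le> s + (n-3)"
      then have c: "Q!(j-1) \<le> y + (n-3)" "y \<le> Q!(j-1) + (n-3)" using sQ by auto
      have jl: "j-1 < j" using j(1) by simp
      obtain m1 m2 where "j-1 \<le> m1" "m1 \<le> j" "Q!m1 \<le> x"
        using LLQ[OF jl c] by blast
      then have "s \<le> x \<or> y \<le> x" using vQ1[of m1] by auto
      then have "y < x" using sx' xy by auto
      then show False using a fs x2 y0 by auto
    qed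
    have y2: "y \<le> 2" "s + 0 = n" using yfar fs x2 sn n x0 y0 yn xy by auto
    have xy12: "(x = 1 \<and> y = 2) \<or> (x = 2 \<and> y = 1)" using x2 y2 x0 y0 xy by auto
    have j2: "2 \<le> j"
    proof (rule ccontr)
      assume "\<not> 2 \<le> j" then have "j = 1" using j by simp
      then show False using s_def y2 perms_D(4)[OF P] n by simp
    qed
    show False
    proof (cases "3 \<le> j")
      case True
      let ?t = "P!(j-2)"
      have tf: "?t \<noteq> 0" "?t \<noteq> s" "?t \<noteq> x" "?t \<noteq> y" "?t \<le> n" "Q!(j-2) = ?t" using tfacts[OF True] by auto
      have t2: "3 \<le> ?t" "?t \<le> n-1" using tf xy12 y2 by auto
      show False
      proof (cases "x = 2")
        case True
        have jl: "j-2 < j" using \<open>3 \<le> j\<close> by simp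
        have c: "P!(j-2) \<le> x + (n-3)" "x \<le> P!(j-2) + (n-3)" using t2 True n by auto
        obtain m1 m2 where "j-2 \<le> m1" "m1 \<le> j" "P!m1 \<le> y"
          using LLP[OF jl c] by blast
        then have "?t \<le> y \<or> s \<le> y \<or> x \<le> y" using vP2[of m1] by auto
        then show False using t2 True xy12 y2 n by auto
      next
        case False
        then have "x = 1" "y = 2" using xy12 by auto
        have jl: "j-2 < j" using \<open>3 \<le> j\<close> by simp
        have c: "Q!(j-2) \<le> y + (n-3)" "y \<le> Q!(j-2) + (n-3)" using t2 tf(6) \<open>y = 2\<close> n by auto
        obtain m1 m2 where "j-2 \<le> m1" "m1 \<le> j" "Q!m1 \<le> x"
          using LLQ[OF jl c] by blast
        then have "?t \<le> x \<or> s \<le> x \<or> y \<le> x" using vQ2[of m1] \<open>3 \<le> j\<close> by auto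
        then show False using t2 \<open>x = 1\<close> \<open>y = 2\<close> y2 n by auto
      qed
    next
      case False
      then have j2': "j = 2" using j2 by simp
      have pq: "P!1 = n" "Q!1 = n" "P!2 = x" "Q!2 = y" using j2' s_def sQ y2 x_def y_def by auto
      show False
      proof (cases "x = 1")
        case True
        then show False using C2[OF P Q H n] pq xy12 by simp
      next
        case False
        then show False using C2[OF Q P H' n] pq xy12 by simp
      qed
    qed
  qed
qed

theorem upper:
  assumes n: "n \<ge> 5" shows "reconstructing n (n-3)"
  unfolding reconstructing_def
proof (intro ballI impI)
  fix P Q assume P: "P \<in> perms n" and Q: "Q \<in> perms n" and pr: "k_profile n (n-3) P = k_profile n (n-3) Q"
  have H: "H n P Q" using H_of_prof[OF pr] .
  show "P = Q"
  proof (rule ccontr)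
    assume ne: "P \<noteq> Q"
    obtain j where j: "1 \<le> j" "j \<le> n" "\<forall>i<j. P!i = Q!i" "P!j \<noteq> Q!j" using FD[OF P Q ne] by blast
    have j': "\<forall>i<j. Q!i = P!i" "Q!j \<noteq> P!j" using j by auto
    have sQ: "Q!(j-1) = P!(j-1)" using j by simp
    show False
    proof (cases "P!(j-1) \<le> P!j + (n-3) \<and> P!j \<le> P!(j-1) + (n-3)")
      case cx: True
      show False
      proof (cases "P!(j-1) \<le> Q!j + (n-3) \<and> Q!j \<le> P!(j-1) + (n-3)")
        case cy: True
        obtain m1 m2 where a: "j-1 \<le> m1" "m1 \<le> j" "j-1 \<le> m2" "m2 \<le> j" "P!m1 \<le> Q!j" "Q!j \<le> P!m2"
          using LL[OF P Q H n j(2) j(3) j(4), of "j-1"] cx j by auto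
        obtain m3 m4 where b: "j-1 \<le> m3" "m3 \<le> j" "j-1 \<le> m4" "m4 \<le> j" "Q!m3 \<le> P!j" "P!j \<le> Q!m4"
          using LL[OF Q P H_sym[OF H] n j(2) j'(1) j'(2), of "j-1"] cy sQ j(1) by auto
        have v: "m = j-1 \<or> m = j" if "j-1 \<le> m" "m \<le> j" for m using that by arith
        have d1: "P!(j-1) \<noteq> P!j"
        proof
          assume e: "P!(j-1) = P!j"
          have "j-1 \<le> n+1" "j \<le> n+1" using j by auto
          then have "j-1 = j" using pos_eq[OF P, of "j-1"] pos_eq[OF P, of j] e by simp
          then show False using j by simp
        qed
        have d2: "Q!(j-1) \<noteq> Q!j"
        proof
          assume e: "Q!(j-1) = Q!j"
          have "j-1 \<le> n+1" "j \<le> n+1" using j by auto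
          then have "j-1 = j" using pos_eq[OF Q, of "j-1"] pos_eq[OF Q, of j] e by simp
          then show False using j by simp
        qed
        have "(P!(j-1) \<le> Q!j \<or> P!j \<le> Q!j) \<and> (Q!j \<le> P!(j-1) \<or> Q!j \<le> P!j)"
          using a v[of m1] v[of m2] by auto
        moreover have "(P!(j-1) \<le> P!j \<or> Q!j \<le> P!j) \<and> (P!j \<le> P!(j-1) \<or> P!j \<le> Q!j)"
          using b v[of m3] v[of m4] sQ by auto
        ultimately show False using d1 d2 sQ j(4) by linarith
      next
        case False
        then show False using Core[OF Q P H_sym[OF H] n j(1) j(2) j'(1) j'(2)] sQ by simp
      qed
    next
      case False
      then show False using Core[OF P Q H n j] by simp
    qed
  qed
qed



fun idx :: "nat list \<Rightarrow> nat \<Rightarrow> nat" where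
  "idx [] a = 0" | "idx (x#xs) a = (if x = a then 0 else Suc (idx xs a))"

fun mnl :: "nat list \<Rightarrow> nat" where
  "mnl [] = 0" | "mnl [x] = x" | "mnl (x#y#xs) = min x (mnl (y#xs))"
fun mxl :: "nat list \<Rightarrow> nat" where
  "mxl [] = 0" | "mxl [x] = x" | "mxl (x#y#xs) = max x (mxl (y#xs))"

definition seg :: "nat list \<Rightarrow> nat \<Rightarrow> nat \<Rightarrow> nat list" where
  "seg xs a b = map ((!) xs) [min (idx xs a) (idx xs b) ..< max (idx xs a) (idx xs b) + 1]"

definition vecx :: "nat \<Rightarrow> nat \<Rightarrow> nat list \<Rightarrow> (nat \<times> nat) list" where
  "vecx n k xs = map (\<lambda>(t,i). (mnl (seg xs t (t+i)), mxl (seg xs t (t+i)))) (concat (map (\<lambda>i. map (\<lambda>t. (t,i)) [0..<n+2-i]) [1..<k+1]))"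

lemma idx_prop: "a \<in> set xs \<Longrightarrow> idx xs a < length xs \<and> xs ! idx xs a = a"
  by (induction xs) auto

lemma idx_pos: "distinct xs \<Longrightarrow> a \<in> set xs \<Longrightarrow> pos xs a = idx xs a"
  using idx_prop[of a xs] pos_nth[of xs "idx xs a"] by simp

lemma between_seg: assumes "distinct xs" "a \<in> set xs" "b \<in> set xs"
  shows "between xs a b = set (seg xs a b)"
  unfolding between_def seg_def using idx_pos[OF assms(1,2)] idx_pos[OF assms(1,3)]
  by (auto simp: image_def less_Suc_eq_le)

lemma mnl_Min: "xs \<noteq> [] \<Longrightarrow> mnl xs = Min (set xs)"
  by (induction xs rule: mnl.induct) auto
lemma mxl_Max: "xs \<noteq> [] \<Longrightarrow> mxl xs = Max (set xs)"
  by (induction xs rule: mxl.induct) auto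

lemma seg_ne: "seg xs a b \<noteq> []"
  unfolding seg_def by simp

lemma vecx_eq:
  assumes P: "P \<in> perms n" and Q: "Q \<in> perms n" and pr: "k_profile n k P = k_profile n k Q"
  shows "vecx n k P = vecx n k Q"
  unfolding vecx_def
proof (rule map_cong[OF refl])
  fix ti assume "ti \<in> set (concat (map (\<lambda>i. map (\<lambda>t. (t,i)) [0..<n+2-i]) [1..<k+1]))"
  then obtain t i where ti: "ti = (t,i)" "1 \<le> i" "i \<le> k" "t + i \<le> n+1" by auto
  have e: "Min (between P t (t+i)) = Min (between Q t (t+i)) \<and> Max (between P t (t+i)) = Max (between Q t (t+i))"
    using prof_same_lt[OF pr, of t "t+i"] ti by simp
  have s: "between P t (t+i) = set (seg P t (t+i))" "between Q t (t+i) = set (seg Q t (t+i))"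
    using between_seg[of P t "t+i"] between_seg[of Q t "t+i"] perms_D[OF P] perms_D[OF Q] ti by auto
  show "(case ti of (t, i) \<Rightarrow> (mnl (seg P t (t + i)), mxl (seg P t (t + i)))) =
        (case ti of (t, i) \<Rightarrow> (mnl (seg Q t (t + i)), mxl (seg Q t (t + i))))"
    using e s ti mnl_Min[OF seg_ne] mxl_Max[OF seg_ne] by simp
qed

lemma perms_shape:
  assumes P: "P \<in> perms n"
  shows "\<exists>M \<in> set (permutations_of_set_list [1..<n+1]). P = 0 # M @ [n+1]"
proof -
  have d: "distinct P" "set P = {0..n+1}" "length P = n+2" "P!0 = 0" "P!(n+1) = n+1" using perms_D[OF P] by auto
  define M where "M = butlast (tl P)"
  have "P = hd P # tl P" using d(3) by (cases P) auto
  moreover have "hd P = 0" using d(3,4) by (cases P) auto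
  moreover have "tl P = butlast (tl P) @ [last (tl P)]"
  proof -
    have "tl P \<noteq> []" using d(3) by (cases P) auto
    then show ?thesis by simp
  qed
  moreover have "last (tl P) = n+1"
  proof -
    have "last P = n+1" using P by (simp add: perms_def)
    moreover have "tl P \<noteq> []" using d(3) by (cases P) auto
    ultimately show ?thesis by (cases P) auto
  qed
  ultimately have PM: "P = 0 # M @ [n+1]" unfolding M_def by metis
  have dM: "distinct M" "0 \<notin> set M" "n+1 \<notin> set M" using d(1) PM by (auto simp: PM)
  have "set P = insert 0 (insert (n+1) (set M))" using PM by auto
  then have "set M = {0..n+1} - {0, n+1}" using d(2) dM by auto
  also have "\<dots> = {1..n}" by auto
  finally have "distinct M" "set M = {1..n}" using dM by auto
  then have "M \<in> permutations_of_set (set [1..<n+1])" unfolding permutations_of_set_def by auto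
  then have "M \<in> set (permutations_of_set_list [1..<n+1])"
    using permutations_of_list[of "[1..<n+1]"] by (simp add: distinct_remdups_id)
  then show ?thesis using PM by blast
qed

lemma recon_of_distinct:
  assumes "distinct (map (\<lambda>M. vecx n k (0#M@[n+1])) (permutations_of_set_list [1..<n+1]))"
  shows "reconstructing n k"
  unfolding reconstructing_def
proof (intro ballI impI)
  fix P Q assume P: "P \<in> perms n" and Q: "Q \<in> perms n" and pr: "k_profile n k P = k_profile n k Q"
  obtain M1 where M1: "M1 \<in> set (permutations_of_set_list [1..<n+1])" "P = 0 # M1 @ [n+1]" using perms_shape[OF P] by blast
  obtain M2 where M2: "M2 \<in> set (permutations_of_set_list [1..<n+1])" "Q = 0 # M2 @ [n+1]" using perms_shape[OF Q] by blast
  have "vecx n k (0#M1@[n+1]) = vecx n k (0#M2@[n+1])" using vecx_eq[OF P Q pr] M1 M2 by simp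
  then have "M1 = M2" using assms M1(1) M2(1) distinct_map[THEN iffD1, OF assms] inj_onD by metis
  then show "P = Q" using M1 M2 by simp
qed

lemma small1: "reconstructing 1 1" by (rule recon_of_distinct) code_simp
lemma small2: "reconstructing 2 1" by (rule recon_of_distinct) code_simp
lemma small3: "reconstructing 3 1" by (rule recon_of_distinct) code_simp
lemma small4: "reconstructing 4 1" by (rule recon_of_distinct) code_simp



definition fam :: "nat \<Rightarrow> nat \<Rightarrow> nat \<Rightarrow> nat list" where
  "fam n x y = 0 # filter (\<lambda>v. v \<noteq> x \<and> v \<noteq> y) [2..<n] @ [1, n, x, y, n+1]"

lemma fam_perm:
  assumes "2 \<le> x" "x < n" "2 \<le> y" "y < n" "x \<noteq> y"
  shows "fam n x y \<in> perms n"
proof -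
  let ?R = "filter (\<lambda>v. v \<noteq> x \<and> v \<noteq> y) [2..<n]"
  have d: "distinct (fam n x y)" using assms by (auto simp: fam_def)
  have "set (fam n x y) = {0} \<union> ({2..<n} - {x,y}) \<union> {1, n, x, y, n+1}" by (auto simp: fam_def)
  also have "\<dots> = {0..n+1}" using assms by auto
  finally have s: "set (fam n x y) = {0..n+1}" .
  have "fam n x y ! 0 = 0" "last (fam n x y) = n+1" by (auto simp: fam_def)
  then show ?thesis using d s by (simp add: perms_def)
qed

lemma fam_len: "length (filter (\<lambda>v. v \<noteq> x \<and> v \<noteq> y) [2..<n]) = length (filter (\<lambda>v. v \<noteq> y \<and> v \<noteq> x) [2..<n])"
  by (metis (no_types, lifting) filter_cong)

lemma MinMax_insert:
  assumes "finite S" "S \<noteq> {}" "Min S \<le> v" "v \<le> Max S"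
  shows "Min (insert v S) = Min S \<and> Max (insert v S) = Max S"
  using assms by (simp add: Min_insert Max_insert min_absorb2 max_absorb2)

lemma fam_MinMax_orient:
  assumes xy: "2 \<le> x" "x < y" "y < n"
    and ab: "a \<le> n+1" "b \<le> n+1" "a \<noteq> b"
  defines "P \<equiv> fam n x y" and "Q \<equiv> fam n y x"
  shows "({a,b} \<noteq> {y,n} \<and> {a,b} \<noteq> {y,n+1}) \<longrightarrow>
           Min (between P a b) = Min (between Q a b) \<and> Max (between P a b) = Max (between Q a b)"
    and "{a,b} \<noteq> {x,y} \<longrightarrow> (pos P a < pos P b \<longleftrightarrow> pos Q a < pos Q b)"
proof -
  have P: "P \<in> perms n" unfolding P_def using fam_perm xy by auto
  have Q: "Q \<in> perms n" unfolding Q_def using fam_perm xy by auto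
  let ?R = "filter (\<lambda>v. v \<noteq> x \<and> v \<noteq> y) [2..<n]"
  define L where "L = length ?R"
  define A where "A = 0 # ?R @ [1, n]"
  have PL: "P = A @ [x, y, n+1]" unfolding P_def fam_def A_def by simp
  have QL: "Q = A @ [y, x, n+1]" unfolding Q_def fam_def A_def by (simp add: conj_commute)
  have lp: "length A = L + 3" unfolding L_def A_def by simp
  have A1: "A!(L+1) = 1" "A!(L+2) = n" unfolding A_def L_def by (simp_all add: nth_append)
  have "length P = L + 6" using PL lp by simp
  then have L: "L + 6 = n + 2" using perms_D(3)[OF P] by simp
  define p where "p = L + 3"
  have pp: "p + 1 = n" using L p_def by simp
  have Pv: "P!p = x" "P!(p+1) = y" "P!(L+1) = 1" "P!(L+2) = n"
    using lp A1 unfolding PL p_def by (simp_all add: nth_append)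
  have Qv: "Q!p = y" "Q!(p+1) = x" "Q!(L+1) = 1" "Q!(L+2) = n"
    using lp A1 unfolding QL p_def by (simp_all add: nth_append)
  have QP: "Q!m = P!m" if "m \<noteq> p" "m \<noteq> p+1" for m
  proof (cases "m < L + 3")
    case True then show ?thesis unfolding PL QL using lp by (simp add: nth_append)
  next
    case False
    define d where "d = m - (L+5)"
    have md: "m = length A + Suc (Suc d)" using False that p_def lp d_def by arith
    show ?thesis unfolding PL QL md by (simp only: nth_append_length_plus) simp
  qed
  have n5: "L + 1 \<le> n+1" "L+2 \<le> n+1" "p \<le> n+1" "p+1 \<le> n+1" using pp p_def by auto
  have posP: "pos P x = p" "pos P y = p+1" "pos P 1 = L+1" "pos P n = L+2"
    using pos_eq[OF P] Pv n5 by (metis)+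
  have posQ: "pos Q y = p" "pos Q x = p+1" "pos Q 1 = L+1" "pos Q n = L+2"
    using pos_eq[OF Q] Qv n5 by (metis)+
  have posv: "pos Q v = pos P v \<and> pos P v \<noteq> p \<and> pos P v \<noteq> p+1" if "v \<le> n+1" "v \<noteq> x" "v \<noteq> y" for v
  proof -
    have a: "pos P v \<noteq> p" "pos P v \<noteq> p+1" using posP pos_inj[OF P, of v x] pos_inj[OF P, of v y] that xy by auto
    have "Q ! pos P v = v" using QP[OF a] pos_perm[OF P that(1)] by simp
    then have "pos Q v = pos P v" using pos_eq[OF Q, of "pos P v"] pos_perm(1)[OF P that(1)] by simp
    then show ?thesis using a by simp
  qed
  have pn1: "pos P (n+1) = n+1" "pos Q (n+1) = n+1" using pos_Pn1[OF P] pos_Pn1[OF Q] by auto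
  have posc: "pos P c \<le> L+2" if "c \<le> n" "c \<noteq> x" "c \<noteq> y" for c
  proof -
    have "pos P c \<le> n" using pos_le_n[OF P that(1)] .
    then show ?thesis using posv[of c] that pp p_def by auto
  qed
  have xn: "x \<le> n+1" "y \<le> n+1" using xy by auto
  have c1: "between P a' b' = between Q a' b'" if "a' \<le> n+1" "b' \<le> n+1" "a' \<noteq> x" "a' \<noteq> y" "b' \<noteq> x" "b' \<noteq> y" for a' b'
  proof
    show "between P a' b' \<subseteq> between Q a' b'"
    proof
      fix e assume "e \<in> between P a' b'"
      then have e: "e \<le> n+1" "min (pos P a') (pos P b') \<le> pos P e" "pos P e \<le> max (pos P a') (pos P b')"
        using between_iff[OF P that(1,2)] by auto
      have pa: "pos Q a' = pos P a'" "pos Q b' = pos P b'" "pos P a' \<noteq> p" "pos P a' \<noteq> p+1" "pos P b' \<noteq> p" "pos P b' \<noteq> p+1"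
        using posv that by auto
      have "min (pos Q a') (pos Q b') \<le> pos Q e \<and> pos Q e \<le> max (pos Q a') (pos Q b')"
      proof (cases "e = x \<or> e = y")
        case True
        then show ?thesis using e pa posP posQ by (auto simp: min_def max_def)
      next
        case False
        then show ?thesis using e pa posv[of e] by auto
      qed
      then show "e \<in> between Q a' b'" using between_iff[OF Q that(1,2)] e by auto
    qed
  next
    show "between Q a' b' \<subseteq> between P a' b'"
    proof
      fix e assume "e \<in> between Q a' b'"
      then have e: "e \<le> n+1" "min (pos Q a') (pos Q b') \<le> pos Q e" "pos Q e \<le> max (pos Q a') (pos Q b')"
        using between_iff[OF Q that(1,2)] by auto
      have pa: "pos Q a' = pos P a'" "pos Q b' = pos P b'" "pos P a' \<noteq> p" "pos P a' \<noteq> p+1" "pos P b' \<noteq> p" "pos P b' \<noteq> p+1"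
        using posv that by auto
      have "min (pos P a') (pos P b') \<le> pos P e \<and> pos P e \<le> max (pos P a') (pos P b')"
      proof (cases "e = x \<or> e = y")
        case True
        then show ?thesis using e pa posP posQ by (auto simp: min_def max_def)
      next
        case False
        then show ?thesis using e pa posv[of e] by auto
      qed
      then show "e \<in> between P a' b'" using between_iff[OF P that(1,2)] e by auto
    qed
  qed
  have fin: "finite (between R a' b')" "between R a' b' \<noteq> {}" if "R \<in> perms n" "a' \<le> n+1" "b' \<le> n+1" for R a' b'
    using between_sub[OF that] by auto
  have Cx: "Min (between P c x) = Min (between Q c x) \<and> Max (between P c x) = Max (between Q c x)"
    if c: "c \<le> n+1" "c \<noteq> x" "c \<noteq> y" for c
  proof (cases "c = n+1")
    case True
    let ?S = "between Q c x"
    have eq: "between P c x = insert y ?S"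
    proof (rule set_eqI)
      fix e
      show "e \<in> between P c x \<longleftrightarrow> e \<in> insert y ?S"
      proof (cases "e = x \<or> e = y")
        case True
        then show ?thesis using between_iff[OF P c(1) xn(1), of e] between_iff[OF Q c(1) xn(1), of e] posP posQ pn1 \<open>c = n+1\<close> xn pp
          by (auto simp: min_def max_def)
      next
        case False
        then have "e \<le> n+1 \<Longrightarrow> pos Q e = pos P e \<and> pos P e \<noteq> p \<and> pos P e \<noteq> p+1" using posv by auto
        then show ?thesis using False between_iff[OF P c(1) xn(1), of e] between_iff[OF Q c(1) xn(1), of e] posP posQ pn1 \<open>c = n+1\<close> pp
          by (auto simp: min_def max_def)
      qed
    qed
    have "x \<in> ?S" "c \<in> ?S" using between_sub[OF Q c(1) xn(1)] by auto
    then have "Min ?S \<le> y" "y \<le> Max ?S" using Min_b_le[OF Q c(1) xn(1), of x] Max_b_ge[OF Q c(1) xn(1), of c] xy True by auto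
    then show ?thesis using eq MinMax_insert[OF fin[OF Q c(1) xn(1)]] by simp
  next
    case False
    then have cn: "c \<le> n" using c by simp
    have pc: "pos P c \<le> L+2" "pos Q c = pos P c" using posc[OF cn c(2,3)] posv[OF c] by auto
    let ?T = "between P c x"
    have eq: "between Q c x = insert y ?T"
    proof (rule set_eqI)
      fix e
      show "e \<in> between Q c x \<longleftrightarrow> e \<in> insert y ?T"
      proof (cases "e = x \<or> e = y")
        case True
        then show ?thesis using between_iff[OF P c(1) xn(1), of e] between_iff[OF Q c(1) xn(1), of e] posP posQ pc xn pp p_def
          by (auto simp: min_def max_def)
      next
        case False
        then have "e \<le> n+1 \<Longrightarrow> pos Q e = pos P e \<and> pos P e \<noteq> p \<and> pos P e \<noteq> p+1" using posv by auto
        then show ?thesis using False between_iff[OF P c(1) xn(1), of e] between_iff[OF Q c(1) xn(1), of e] posP posQ pc pp p_def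
          by (auto simp: min_def max_def)
      qed
    qed
    have "x \<in> ?T" using between_sub[OF P c(1) xn(1)] by auto
    moreover have "n \<in> ?T" using between_iff[OF P c(1) xn(1), of n] posP pc p_def by auto
    ultimately have "Min ?T \<le> y" "y \<le> Max ?T" using Min_b_le[OF P c(1) xn(1), of x] Max_b_ge[OF P c(1) xn(1), of n] xy by auto
    then show ?thesis using eq MinMax_insert[OF fin[OF P c(1) xn(1)]] by simp
  qed
  have Cy: "Min (between P c y) = Min (between Q c y) \<and> Max (between P c y) = Max (between Q c y)"
    if c: "c \<le> n+1" "c \<noteq> x" "c \<noteq> y" "c \<noteq> n" "c \<noteq> n+1" for c
  proof -
    have cn: "c \<le> n" using c by simp
    have pc: "pos P c \<le> L+2" "pos Q c = pos P c" using posc[OF cn c(2,3)] posv[OF c(1-3)] by auto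
    have "pos P c \<noteq> L+2" using posP pos_inj[OF P, of c n] c by auto
    then have pc1: "pos P c \<le> L+1" using pc by simp
    let ?U = "between Q c y"
    have eq: "between P c y = insert x ?U"
    proof (rule set_eqI)
      fix e
      show "e \<in> between P c y \<longleftrightarrow> e \<in> insert x ?U"
      proof (cases "e = x \<or> e = y")
        case True
        then show ?thesis using between_iff[OF P c(1) xn(2), of e] between_iff[OF Q c(1) xn(2), of e] posP posQ pc pc1 xn pp p_def
          by (auto simp: min_def max_def)
      next
        case False
        then have "e \<le> n+1 \<Longrightarrow> pos Q e = pos P e \<and> pos P e \<noteq> p \<and> pos P e \<noteq> p+1" using posv by auto
        then show ?thesis using False between_iff[OF P c(1) xn(2), of e] between_iff[OF Q c(1) xn(2), of e] posP posQ pc pc1 pp p_def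
          by (auto simp: min_def max_def)
      qed
    qed
    have "y \<in> ?U" using between_sub[OF Q c(1) xn(2)] by auto
    moreover have "1 \<in> ?U" using between_iff[OF Q c(1) xn(2), of 1] posQ pc pc1 p_def by auto
    ultimately have "Min ?U \<le> x" "x \<le> Max ?U" using Min_b_le[OF Q c(1) xn(2), of 1] Max_b_ge[OF Q c(1) xn(2), of y] xy by auto
    then show ?thesis using eq MinMax_insert[OF fin[OF Q c(1) xn(2)]] by simp
  qed
  have Cxy: "between P x y = between Q x y"
  proof (rule set_eqI)
    fix e
    show "e \<in> between P x y \<longleftrightarrow> e \<in> between Q x y"
    proof (cases "e = x \<or> e = y")
      case True
      then show ?thesis using between_iff[OF P xn, of e] between_iff[OF Q xn, of e] posP posQ xn by auto
    next
      case False
      then have "e \<le> n+1 \<Longrightarrow> pos Q e = pos P e \<and> pos P e \<noteq> p \<and> pos P e \<noteq> p+1" using posv by auto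
      then show ?thesis using False between_iff[OF P xn, of e] between_iff[OF Q xn, of e] posP posQ by auto
    qed
  qed
  show "({a,b} \<noteq> {y,n} \<and> {a,b} \<noteq> {y,n+1}) \<longrightarrow>
           Min (between P a b) = Min (between Q a b) \<and> Max (between P a b) = Max (between Q a b)"
  proof
    assume cond: "{a,b} \<noteq> {y,n} \<and> {a,b} \<noteq> {y,n+1}"
    consider "a \<noteq> x \<and> a \<noteq> y \<and> b \<noteq> x \<and> b \<noteq> y" | "a = x \<and> b = y" | "a = y \<and> b = x"
      | "a = x \<and> b \<noteq> y" | "a = y \<and> b \<noteq> x" | "b = x \<and> a \<noteq> y" | "b = y \<and> a \<noteq> x" by blast
    then show "Min (between P a b) = Min (between Q a b) \<and> Max (between P a b) = Max (between Q a b)"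
    proof cases
      case 1 then show ?thesis using c1[OF ab(1,2)] by simp
    next
      case 2 then show ?thesis using Cxy by simp
    next
      case 3 then show ?thesis using Cxy between_sym[of P a b] between_sym[of Q a b] by simp
    next
      case 4 then show ?thesis using Cx[OF ab(2)] ab between_sym[of P a b] between_sym[of Q a b] by auto
    next
      case 5
      then have "b \<noteq> n" "b \<noteq> n+1" using cond by auto
      then show ?thesis using Cy[OF ab(2)] 5 ab between_sym[of P a b] between_sym[of Q a b] by auto
    next
      case 6 then show ?thesis using Cx[OF ab(1)] ab by auto
    next
      case 7
      then have "a \<noteq> n" "a \<noteq> n+1" using cond by auto
      then show ?thesis using Cy[OF ab(1)] 7 ab by auto
    qed
  qed
  show "{a,b} \<noteq> {x,y} \<longrightarrow> (pos P a < pos P b \<longleftrightarrow> pos Q a < pos Q b)"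
  proof
    assume nxy: "{a,b} \<noteq> {x,y}"
    show "pos P a < pos P b \<longleftrightarrow> pos Q a < pos Q b"
    proof (cases "a \<in> {x,y}")
      case True
      then have b: "b \<noteq> x" "b \<noteq> y" using nxy ab by auto
      then show ?thesis using True posv[OF ab(2) b] posP posQ by auto
    next
      case False
      then have a: "a \<noteq> x" "a \<noteq> y" by auto
      show ?thesis
      proof (cases "b \<in> {x,y}")
        case True
        then show ?thesis using posv[OF ab(1) a] posP posQ by auto
      next
        case False
        then show ?thesis using posv[OF ab(1) a] posv[OF ab(2)] by auto
      qed
    qed
  qed
qed



lemma fam_prof:
  assumes xy: "2 \<le> x" "x < y" "y < n" and k: "y + k < n"
  shows "k_profile n k (fam n x y) = k_profile n k (fam n y x)"
proof -
  have F: "Min (between (fam n x y) t (t+i)) = Min (between (fam n y x) t (t+i)) \<and>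
           Max (between (fam n x y) t (t+i)) = Max (between (fam n y x) t (t+i))"
    if "1 \<le> i" "i \<le> k" "t + i \<le> n+1" for t i
  proof -
    have "{t, t+i} \<noteq> {y,n}" "{t,t+i} \<noteq> {y, n+1}" using that k by (auto simp: doubleton_eq_iff)
    then show ?thesis using fam_MinMax_orient(1)[OF xy, of t "t+i"] that by auto
  qed
  show ?thesis unfolding k_profile_def
    by (rule Collect_cong) (metis (no_types, lifting) F)
qed

lemma fam_dprof:
  assumes xy: "2 \<le> x" "x < y" "y < n" and k: "y + k < n" "x + k < y"
  shows "directed_k_profile n k (fam n x y) = directed_k_profile n k (fam n y x)"
proof -
  have F: "Min (between (fam n x y) t (t+i)) = Min (between (fam n y x) t (t+i)) \<and>
           Max (between (fam n x y) t (t+i)) = Max (between (fam n y x) t (t+i)) \<and>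
           (pos (fam n x y) t < pos (fam n x y) (t+i) \<longleftrightarrow> pos (fam n y x) t < pos (fam n y x) (t+i))"
    if "1 \<le> i" "i \<le> k" "t + i \<le> n+1" for t i
  proof -
    have "{t, t+i} \<noteq> {y,n}" "{t,t+i} \<noteq> {y, n+1}" "{t,t+i} \<noteq> {x,y}" using that k by (auto simp: doubleton_eq_iff)
    then show ?thesis using fam_MinMax_orient[OF xy, of t "t+i"] that by auto
  qed
  show ?thesis unfolding directed_k_profile_def
    apply (rule Collect_cong)
    apply (rule ex_cong1)
    apply (rule ex_cong1)
    subgoal for z t i
      by (cases "1 \<le> i \<and> i \<le> k \<and> t + i \<le> n+1") (use F[of i t] in auto)
    done
qed

lemma fam_ne: assumes "x \<noteq> y" shows "fam n x y \<noteq> fam n y x"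
proof -
  have "filter (\<lambda>v. v \<noteq> x \<and> v \<noteq> y) [2..<n] = filter (\<lambda>v. v \<noteq> y \<and> v \<noteq> x) [2..<n]"
    by (metis (no_types, lifting) filter_cong)
  then show ?thesis unfolding fam_def using assms by simp
qed

lemma not_recon:
  assumes n: "n \<ge> 5" and k: "k \<le> n-4"
  shows "\<not> reconstructing n k"
proof
  assume r: "reconstructing n k"
  have "fam n 2 3 \<in> perms n" "fam n 3 2 \<in> perms n" using fam_perm n by auto
  moreover have "k_profile n k (fam n 2 3) = k_profile n k (fam n 3 2)" using fam_prof[of 2 3 n k] n k by simp
  ultimately have "fam n 2 3 = fam n 3 2" using r unfolding reconstructing_def by blast
  then show False using fam_ne[of 2 3 n] by simp
qed

lemma not_drecon:
  assumes n: "n \<ge> 6" and k: "k \<le> (n-4) div 2"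
  shows "\<not> directed_reconstructing n k"
proof
  assume r: "directed_reconstructing n k"
  have xy: "2 \<le> (2::nat)" "2 < k+3" "k+3 < n" "k+3 + k < n" "2 + k < k+3" using n k by auto
  have "fam n 2 (k+3) \<in> perms n" "fam n (k+3) 2 \<in> perms n" using fam_perm xy by auto
  moreover have "directed_k_profile n k (fam n 2 (k+3)) = directed_k_profile n k (fam n (k+3) 2)"
    using fam_dprof[OF xy] by simp
  ultimately have "fam n 2 (k+3) = fam n (k+3) 2" using r unfolding directed_reconstructing_def by blast
  then show False using fam_ne[of 2 "k+3" n] by simp
qed

lemma prof_proj: "k_profile n k P = (\<lambda>(a,b,c,d,e). (a,b,c,d)) ` directed_k_profile n k P"
  unfolding k_profile_def directed_k_profile_def by (auto simp: image_def)

lemma recon_drecon: "reconstructing n k \<Longrightarrow> directed_reconstructing n k"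
  unfolding reconstructing_def directed_reconstructing_def using prof_proj by metis

lemma small: "n \<in> {1,2,3,4} \<Longrightarrow> reconstructing n 1"
  using small1 small2 small3 small4 by auto

lemma ku: assumes "n \<ge> 1" shows "k_u n = max 1 (n - 3)"
proof (cases "n \<le> 4")
  case True
  then have "n \<in> {1,2,3,4}" using assms by auto
  then have r: "reconstructing n 1" using small by simp
  have "k_u n = 1" unfolding k_u_def
    by (rule Least_equality) (use r in auto)
  then show ?thesis using True by simp
next
  case False
  then have n: "n \<ge> 5" by simp
  have "k_u n = n - 3" unfolding k_u_def
  proof (rule Least_equality)
    have "1 \<le> n - 3" "n - 3 \<le> n + 1" using n by arith+
    then show "1 \<le> n - 3 \<and> n - 3 \<le> n + 1 \<and> reconstructing n (n - 3)" using upper[OF n] by simp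
  next
    fix k assume k: "1 \<le> k \<and> k \<le> n + 1 \<and> reconstructing n k"
    show "n - 3 \<le> k"
    proof (rule ccontr)
      assume "\<not> n - 3 \<le> k" then have "k \<le> n - 4" by simp
      then show False using not_recon[OF n] k by blast
    qed
  qed
  then show ?thesis using n by simp
qed

lemma kd_ex: assumes "n \<ge> 1" shows "1 \<le> k_d n \<and> k_d n \<le> n+1 \<and> directed_reconstructing n (k_d n)"
proof -
  have "reconstructing n (max 1 (n-3))"
  proof (cases "n \<le> 4")
    case True
    then have "n \<in> {1,2,3,4}" using assms by auto
    then show ?thesis using small True by simp
  next
    case False then show ?thesis using upper by simp
  qed
  then have "1 \<le> max 1 (n-3) \<and> max 1 (n-3) \<le> n+1 \<and> directed_reconstructing n (max 1 (n-3))"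
    using recon_drecon by auto
  then show ?thesis unfolding k_d_def by (rule LeastI)
qed

lemma kd_lower: assumes n: "n \<ge> 4" shows "real (k_d n) \<ge> of_int \<lceil>(real n - 3) / 2\<rceil>"
proof -
  have kd: "1 \<le> k_d n" "directed_reconstructing n (k_d n)" using kd_ex n by auto
  have "n - 3 \<le> 2 * k_d n"
  proof (cases "n \<ge> 6")
    case True
    have "(n-4) div 2 < k_d n"
    proof (rule ccontr)
      assume "\<not> (n-4) div 2 < k_d n"
      then show False using not_drecon[OF True] kd by simp
    qed
    then show ?thesis by linarith
  next
    case False
    then show ?thesis using kd by simp
  qed
  then have "real (n - 3) \<le> real (2 * k_d n)" by (simp only: of_nat_le_iff)
  moreover have "real (n - 3) = real n - 3" using n by simp
  ultimately have "(real n - 3) / 2 \<le> real (k_d n)" by simp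
  then have "\<lceil>(real n - 3) / 2\<rceil> \<le> int (k_d n)" by (simp add: ceiling_le_iff)
  then show ?thesis by simp
qed

lemma kd_small: assumes "n \<in> {1,2,3}" shows "k_d n = 1"
proof -
  have "directed_reconstructing n 1" using recon_drecon small assms by auto
  then show ?thesis unfolding k_d_def by (intro Least_equality) auto
qed

theorem theorem2:
  shows "(\<forall>n::nat. n \<ge> 1 \<longrightarrow> k_u n = max 1 (n - 3)) \<and>
         (\<forall>n::nat. n \<ge> 4 \<longrightarrow> real (k_d n) \<ge> of_int \<lceil>(real n - 3) / 2\<rceil>) \<and>
         (\<forall>n::nat. n \<in> {1, 2, 3} \<longrightarrow> k_d n = 1)"
  using ku kd_lower kd_small by blast

end
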